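(* Let $T$ be a string of length $n$ over an alphabet $\Sigma$ of size $\sigma\ge 2$. For any $1<i\le j\le n$, $|\mathsf{MUS}(T[i-1..j])\bigtriangleup\mathsf{MUS}(T[i..j])|\le 4$ and $-1\le|\mathsf{MUS}(T[i-1..j])|-|\mathsf{MUS}(T[i..j])|\le 2$. Furthermore, these bounds are tight: for any $\sigma\ge 3$ and any $i,j$ with $1<i\le j\le n$ and $j-i+1\ge 5$, there exist strings $T$ over an alphabet of size $\sigma$ attaining $|\mathsf{MUS}(T[i-1..j])\bigtriangleup\mathsf{MUS}(T[i..j])|=4$, strings attaining $|\mathsf{MUS}(T[i-1..j])|-|\mathsf{MUS}(T[i..j])|=2$, and strings attaining $|\mathsf{MUS}(T[i-1..j])|-|\mathsf{MUS}(T[i..j])|=-1$.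
   Context: $T[a..b]$ denotes the substring of $T$ from position $a$ to $b$. For a string $S$ and a string $w$, $\#\mathit{occ}_S(w)$ is the number of positions at which $w$ occurs in $S$; by convention $\#\mathit{occ}_S(\varepsilon)=|S|+1$. A substring $w$ of $S$ is unique in $S$ if $\#\mathit{occ}_S(w)=1$ and repeating in $S$ if $\#\mathit{occ}_S(w)\ge 2$. For $1\le i\le j\le n$, $\mathsf{MUS}(T[i..j])$ is the set of intervals $[s,t]$ (positions in $T$) with $i\le s\le t\le j$ such that $T[s..t]$ is unique in $T[i..j]$ and every proper substring of $T[s..t]$ (including the empty string) is repeating in $T[i..j]$. $\bigtriangleup$ denotes symmetric difference. *)

theory Defs
  imports Main "HOL-Library.Sublist"
begin

text \<open>Strings are lists; positions are 1-based as in the paper: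
  T[a..b] is the substring from position a to position b (inclusive).\<close>
definition substr :: "'a list \<Rightarrow> nat \<Rightarrow> nat \<Rightarrow> 'a list" where
  "substr T a b = take (Suc b - a) (drop (a - 1) T)"

text \<open>Number of occurrences of w in S (0-based starting offsets).
  For w = [] this is |S| + 1, matching the paper's convention.\<close>
definition occ :: "'a list \<Rightarrow> 'a list \<Rightarrow> nat" where
  "occ S w = card {p. p + length w \<le> length S \<and> take (length w) (drop p S) = w}"

definition MUS :: "'a list \<Rightarrow> nat \<Rightarrow> nat \<Rightarrow> (nat \<times> nat) set" where
  "MUS T i j = {(s, t). i \<le> s \<and> s \<le> t \<and> t \<le> j
      \<and> occ (substr T i j) (substr T s t) = 1
      \<and> (\<forall>u. strict_sublist u (substr T s t) \<longrightarrow> occ (substr T i j) u \<ge> 2)}"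

definition symdiff :: "'b set \<Rightarrow> 'b set \<Rightarrow> 'b set" where
  "symdiff A B = (A - B) \<union> (B - A)"

end

theory Submission
  imports Defs
begin

definition oc :: "'a list \<Rightarrow> 'a list \<Rightarrow> nat \<Rightarrow> bool" where
  "oc W w p \<longleftrightarrow> p + length w \<le> length W \<and> take (length w) (drop p W) = w"

lemma occ_oc: "occ W w = card {p. oc W w p}"
  unfolding occ_def oc_def by simp

lemma fin_oc: "finite {p. oc W w p}"
  by (rule finite_subset[of _ "{..length W}"]) (auto simp: oc_def)

lemma occ_Nil: "occ W [] = length W + 1"
  unfolding occ_def by simp

lemma oc_sublist: assumes "oc W (x @ u @ y) p" shows "oc W u (p + length x)"
proof -
  have h: "take (length x + (length u + length y)) (drop p W) = x @ u @ y"
    and l: "p + (length x + (length u + length y)) \<le> length W" using assms by (simp_all add: oc_def)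
  have "drop (length x) (take (length x + (length u + length y)) (drop p W)) = u @ y" using h by simp
  hence "take (length u + length y) (drop (p + length x) W) = u @ y"
    by (simp add: drop_take drop_drop add.commute)
  hence "take (length u) (take (length u + length y) (drop (p + length x) W)) = u" by simp
  hence "take (length u) (drop (p + length x) W) = u" by (simp add: min_def)
  thus ?thesis using l by (simp add: oc_def)
qed

lemma occ_mono: assumes "sublist u v" shows "occ W v \<le> occ W u"
proof -
  obtain x y where v: "v = x @ u @ y" using assms by (auto simp: sublist_def)
  have "card {p. oc W v p} \<le> card {p. oc W u p}"
  proof (rule card_inj_on_le[where f = "\<lambda>p. p + length x"])
    show "inj_on (\<lambda>p. p + length x) {p. oc W v p}" by (auto simp: inj_on_def)
    show "(\<lambda>p. p + length x) ` {p. oc W v p} \<subseteq> {p. oc W u p}" using oc_sublist v by blast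
  qed (rule fin_oc)
  thus ?thesis by (simp add: occ_oc)
qed

lemma occ_ge1: assumes "oc W w p" shows "1 \<le> occ W w"
proof -
  have "{p. oc W w p} \<noteq> {}" using assms by auto
  hence "card {p. oc W w p} > 0" using fin_oc by (simp add: card_gt_0_iff)
  thus ?thesis by (simp add: occ_oc)
qed

lemma occ_ge2: "oc W w p \<Longrightarrow> oc W w q \<Longrightarrow> p \<noteq> q \<Longrightarrow> 2 \<le> occ W w"
proof -
  assume "oc W w p" "oc W w q" "p \<noteq> q"
  hence "{p, q} \<subseteq> {p. oc W w p}" by auto
  from card_mono[OF fin_oc this] \<open>p \<noteq> q\<close> show ?thesis by (simp add: occ_oc)
qed

lemma occ_uniq: "occ W w = 1 \<Longrightarrow> oc W w p \<Longrightarrow> oc W w q \<Longrightarrow> p = q"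
  using occ_ge2 by fastforce

lemma occ1_ex: "occ W w = 1 \<Longrightarrow> \<exists>p. oc W w p"
  unfolding occ_oc by (metis card_1_singletonE mem_Collect_eq singletonI)

lemma occ_le1: "(\<And>q. oc W w q \<Longrightarrow> q = p) \<Longrightarrow> occ W w \<le> 1"
proof -
  assume "\<And>q. oc W w q \<Longrightarrow> q = p"
  hence "{p. oc W w p} \<subseteq> {p}" by auto
  from card_mono[OF _ this] show ?thesis by (simp add: occ_oc)
qed

lemma occ_eq1: "oc W w p \<Longrightarrow> (\<And>q. oc W w q \<Longrightarrow> q = p) \<Longrightarrow> occ W w = 1"
  using occ_le1 occ_ge1 by (metis le_antisym)

lemma occ_eq0: "(\<And>q. \<not> oc W w q) \<Longrightarrow> occ W w = 0"
  by (simp add: occ_oc)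

lemma oc_Cons: "oc (c # S) w p \<longleftrightarrow> (p = 0 \<and> prefix w (c # S)) \<or> (p > 0 \<and> oc S w (p - 1))"
proof (cases p)
  case 0
  have "oc (c # S) w 0 \<longleftrightarrow> prefix w (c # S)"
  proof
    assume "oc (c # S) w 0"
    hence "take (length w) (c # S) = w" by (simp add: oc_def)
    thus "prefix w (c # S)" by (metis take_is_prefix)
  next
    assume "prefix w (c # S)"
    then obtain z where "c # S = w @ z" by (auto simp: prefix_def)
    thus "oc (c # S) w 0" unfolding oc_def by (metis add_0 append_eq_conv_conj drop0 le_add1 length_append)
  qed
  thus ?thesis using 0 by simp
next
  case (Suc q)
  thus ?thesis by (simp add: oc_def)
qed

lemma occ_Cons: "occ (c # S) w = occ S w + (if prefix w (c # S) then 1 else 0)"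
proof -
  have e: "{p. oc (c # S) w p} = (if prefix w (c # S) then {0} else {}) \<union> Suc ` {p. oc S w p}"
    by (auto simp: oc_Cons image_iff intro: Suc_pred[symmetric])
  have "card {p. oc (c # S) w p} = card (if prefix w (c # S) then {0::nat} else {}) + card (Suc ` {p. oc S w p})"
    unfolding e by (rule card_Un_disjoint) (auto intro: fin_oc)
  thus ?thesis by (simp add: occ_oc card_image)
qed


definition sub :: "'a list \<Rightarrow> nat \<Rightarrow> nat \<Rightarrow> 'a list" where
  "sub W s e = take (e - s) (drop s W)"

definition mus :: "'a list \<Rightarrow> (nat \<times> nat) set" where
  "mus W = {(s, e). s < e \<and> e \<le> length W \<and> occ W (sub W s e) = 1
      \<and> 2 \<le> occ W (sub W (Suc s) e) \<and> 2 \<le> occ W (sub W s (e - 1))}"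

lemma oc_sub: "s \<le> e \<Longrightarrow> e \<le> length W \<Longrightarrow> oc W (sub W s e) s"
  by (simp add: oc_def sub_def)

lemma len_sub: "s \<le> e \<Longrightarrow> e \<le> length W \<Longrightarrow> length (sub W s e) = e - s"
  by (simp add: sub_def)

lemma sub_split: "s \<le> m \<Longrightarrow> m \<le> e \<Longrightarrow> sub W s e = sub W s m @ sub W m e"
proof -
  assume a: "s \<le> m" "m \<le> e"
  have "sub W s e = take ((m - s) + (e - m)) (drop s W)" using a by (simp add: sub_def)
  also have "\<dots> = sub W s m @ sub W m e"
    unfolding take_add using a by (simp add: sub_def drop_drop)
  finally show ?thesis .
qed

lemma sublist_sub: "s' \<le> s \<Longrightarrow> s \<le> e \<Longrightarrow> e \<le> e' \<Longrightarrow> sublist (sub W s e) (sub W s' e')"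
proof -
  assume a: "s' \<le> s" "s \<le> e" "e \<le> e'"
  have "sub W s' e' = sub W s' s @ sub W s e @ sub W e e'"
    using a sub_split[of s' s e' W] sub_split[of s e e' W] by simp
  thus ?thesis by (metis sublist_appendI)
qed

lemma sub_Cons: "0 < s \<Longrightarrow> sub (c # S) s e = sub S (s - 1) (e - 1)"
  by (cases s) (auto simp: sub_def)

lemma finite_mus: "finite (mus W)"
  by (rule finite_subset[of _ "{..length W} \<times> {..length W}"]) (auto simp: mus_def)

lemma nest:
  assumes x: "(s, e) \<in> mus W" and y: "(s', e') \<in> mus W" and le: "s' \<le> s" "e \<le> e'"
  shows "s = s' \<and> e = e'"
proof (rule ccontr)
  assume ne: "\<not> (s = s' \<and> e = e')"
  have u: "occ W (sub W s e) = 1" and se: "s < e" using x by (auto simp: mus_def)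
  have r1: "2 \<le> occ W (sub W (Suc s') e')" and r2: "2 \<le> occ W (sub W s' (e' - 1))"
    using y by (auto simp: mus_def)
  show False
  proof (cases "s' < s")
    case True
    hence "sublist (sub W s e) (sub W (Suc s') e')" using se le by (intro sublist_sub) auto
    from occ_mono[OF this, of W] u r1 show False by simp
  next
    case False
    hence "e < e'" using ne le by auto
    hence "sublist (sub W s e) (sub W s' (e' - 1))" using se le by (intro sublist_sub) auto
    from occ_mono[OF this, of W] u r2 show False by simp
  qed
qed

lemma same_start:
  assumes "prefix v X" "prefix v' X" "occ W v = 1" "occ W v' = 1" "oc W v p" "oc W v' p'"
  shows "p = p'"
proof -
  have "prefix v v' \<or> prefix v' v" using assms(1,2) prefix_same_cases by blast
  thus ?thesis
  proof
    assume "prefix v v'"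
    then obtain z where "v' = v @ z" by (auto simp: prefix_def)
    hence "oc W v p'" using oc_sublist[of W "[]" v z p'] assms(6) by simp
    thus ?thesis using occ_uniq assms by metis
  next
    assume "prefix v' v"
    then obtain z where "v = v' @ z" by (auto simp: prefix_def)
    hence "oc W v' p" using oc_sublist[of W "[]" v' z p] assms(5) by simp
    thus ?thesis using occ_uniq assms by metis
  qed
qed

definition ch :: "'a list \<Rightarrow> 'a list \<Rightarrow> 'a list \<Rightarrow> bool" where
  "ch S U v \<longleftrightarrow> prefix v U \<and> occ S v = 1"

definition shift1 :: "(nat \<times> nat) set \<Rightarrow> (nat \<times> nat) set" where
  "shift1 X = (\<lambda>(s, e). (Suc s, Suc e)) ` X"

lemma in_shift1: "(s, e) \<in> shift1 X \<longleftrightarrow> 0 < s \<and> 0 < e \<and> (s - 1, e - 1) \<in> X"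
  unfolding shift1_def
proof
  assume "(s, e) \<in> (\<lambda>(s, e). (Suc s, Suc e)) ` X"
  then obtain s0 e0 where "(s0, e0) \<in> X" "(s, e) = (Suc s0, Suc e0)" by auto
  thus "0 < s \<and> 0 < e \<and> (s - 1, e - 1) \<in> X" by simp
next
  assume h: "0 < s \<and> 0 < e \<and> (s - 1, e - 1) \<in> X"
  hence "(s, e) = (\<lambda>(s, e). (Suc s, Suc e)) (s - 1, e - 1)" by simp
  thus "(s, e) \<in> (\<lambda>(s, e). (Suc s, Suc e)) ` X" using h by blast
qed

lemma rem_ch:
  assumes "(s, e) \<in> mus S" "(Suc s, Suc e) \<notin> mus (c # S)"
  shows "ch S (c # S) (sub S s e)"
proof -
  have m: "s < e" "e \<le> length S" "occ S (sub S s e) = 1" "2 \<le> occ S (sub S (Suc s) e)"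
     "2 \<le> occ S (sub S s (e - 1))" using assms(1) by (auto simp: mus_def)
  have "occ (c # S) (sub S s e) \<noteq> 1"
  proof
    assume o: "occ (c # S) (sub S s e) = 1"
    have "2 \<le> occ (c # S) (sub S (Suc s) e)" "2 \<le> occ (c # S) (sub S s (e - 1))"
      using m by (auto simp: occ_Cons)
    thus False using assms(2) o m by (auto simp: mus_def sub_Cons)
  qed
  thus ?thesis using m by (auto simp: ch_def occ_Cons split: if_splits)
qed

lemma occ_U_ge2:
  assumes "2 \<le> occ (c # S) v"
  shows "2 \<le> occ S v \<or> ch S (c # S) v"
  using assms by (auto simp: ch_def occ_Cons split: if_splits)

lemma add_class:
  assumes x: "(s, e) \<in> mus (c # S)" and nb: "(s, e) \<notin> shift1 (mus S)"
  shows "s = 0 \<or> ch S (c # S) (sub (c # S) (Suc s) e) \<or> ch S (c # S) (sub (c # S) s (e - 1))"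
proof (rule ccontr)
  assume "\<not> ?thesis"
  hence s0: "0 < s" and n1: "\<not> ch S (c # S) (sub (c # S) (Suc s) e)"
    and n2: "\<not> ch S (c # S) (sub (c # S) s (e - 1))" by auto
  have m: "s < e" "e \<le> Suc (length S)" "occ (c # S) (sub (c # S) s e) = 1"
    "2 \<le> occ (c # S) (sub (c # S) (Suc s) e)" "2 \<le> occ (c # S) (sub (c # S) s (e - 1))"
    using x by (auto simp: mus_def)
  have e1: "sub (c # S) s e = sub S (s - 1) (e - 1)" using s0 by (simp add: sub_Cons)
  have e2: "sub (c # S) (Suc s) e = sub S (Suc (s - 1)) (e - 1)" using s0 by (simp add: sub_Cons)
  have e3: "sub (c # S) s (e - 1) = sub S (s - 1) (e - 1 - 1)" using s0 by (simp add: sub_Cons)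
  have "1 \<le> occ S (sub S (s - 1) (e - 1))" using m by (intro occ_ge1[OF oc_sub]) auto
  hence o1: "occ S (sub S (s - 1) (e - 1)) = 1" using m(3) e1 by (simp add: occ_Cons split: if_splits)
  have o2: "2 \<le> occ S (sub S (Suc (s - 1)) (e - 1))" using occ_U_ge2[OF m(4)] n1 e2 by simp
  have o3: "2 \<le> occ S (sub S (s - 1) (e - 1 - 1))" using occ_U_ge2[OF m(5)] n2 e3 by simp
  have "(s - 1, e - 1) \<in> mus S" using o1 o2 o3 m(1,2) s0 by (auto simp: mus_def)
  hence "(s, e) \<in> shift1 (mus S)" using s0 m(1) by (simp add: in_shift1)
  thus False using nb by simp
qed

lemma occ_Nil_ge2: "S \<noteq> [] \<Longrightarrow> 2 \<le> occ S []"
  by (cases S) (auto simp: occ_Nil)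

lemma rem_exists:
  assumes S: "S \<noteq> []" and v: "ch S (c # S) v"
  shows "\<exists>x. x \<in> shift1 (mus S) - mus (c # S)"
proof -
  define U where "U = c # S"
  define P where "P = (\<lambda>q. ch S U (take q U))"
  have "take (length v) U = v" using v by (auto simp: ch_def prefix_def U_def)
  hence Pv: "P (length v)" using v by (simp add: P_def U_def)
  define q where "q = (LEAST q. P q)"
  have Pq: "P q" unfolding q_def by (rule LeastI[of P, OF Pv])
  have minq: "\<And>q'. q' < q \<Longrightarrow> \<not> P q'" unfolding q_def by (rule not_less_Least)
  have q0: "q \<noteq> 0"
  proof
    assume "q = 0"
    hence "occ S [] = 1" using Pq by (simp add: P_def ch_def)
    thus False using occ_Nil_ge2[OF S] by simp
  qed
  define w where "w = take q U"
  have wo: "occ S w = 1" and wp: "prefix w U" using Pq by (auto simp: P_def ch_def w_def)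
  obtain p where p: "oc S w p" using occ1_ex[OF wo] by blast
  have lw: "length w = q" using p by (auto simp: oc_def w_def U_def)
  have pq: "p + q \<le> length S" using p lw by (simp add: oc_def)
  have tw: "take q (drop p S) = take q U" using p lw by (simp add: oc_def w_def)
  have s1: "sub S p (p + q) = w" using tw by (simp add: sub_def w_def)
  have s2: "sub S (Suc p) (p + q) = take (q - 1) S"
  proof -
    have "tl (take q (drop p S)) = tl (take q U)" using tw by simp
    hence "take (q - 1) (tl (drop p S)) = take (q - 1) S" by (simp add: tl_take U_def)
    thus ?thesis by (simp add: sub_def drop_Suc tl_drop)
  qed
  have s3: "sub S p (p + q - 1) = take (q - 1) U"
  proof -
    have "take (q - 1) (take q (drop p S)) = take (q - 1) (take q U)" using tw by simp
    thus ?thesis by (simp add: sub_def min_def)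
  qed
  have a2: "2 \<le> occ S (sub S (Suc p) (p + q))"
  proof (rule occ_ge2)
    show "oc S (sub S (Suc p) (p + q)) (Suc p)" using q0 pq by (intro oc_sub) auto
    show "oc S (sub S (Suc p) (p + q)) 0" unfolding s2 using pq by (simp add: oc_def)
  qed simp
  have a3: "2 \<le> occ S (sub S p (p + q - 1))"
  proof -
    have "1 \<le> occ S (sub S p (p + q - 1))" using q0 pq by (intro occ_ge1[OF oc_sub]) auto
    moreover have "\<not> P (q - 1)" using minq q0 by simp
    hence "occ S (take (q - 1) U) \<noteq> 1" by (simp add: P_def ch_def take_is_prefix)
    ultimately show ?thesis using s3 by simp
  qed
  have inS: "(p, p + q) \<in> mus S" using q0 pq wo s1 a2 a3 by (simp add: mus_def)
  hence inB: "(Suc p, Suc (p + q)) \<in> shift1 (mus S)" by (simp add: in_shift1)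
  have "occ U w = 2" using wo wp by (simp add: U_def occ_Cons)
  hence "(Suc p, Suc (p + q)) \<notin> mus (c # S)" using s1 by (simp add: mus_def sub_Cons U_def)
  thus ?thesis using inB by blast
qed


lemma card_le1I: "finite X \<Longrightarrow> (\<And>x y. x \<in> X \<Longrightarrow> y \<in> X \<Longrightarrow> x = y) \<Longrightarrow> card X \<le> 1"
  using card_le_Suc0_iff_eq by (metis One_nat_def)

lemma nest2: "(s, e) \<in> mus W \<Longrightarrow> (s, e') \<in> mus W \<Longrightarrow> e = e'"
  using nest[of s e W s e'] nest[of s e' W s e] by (cases "e \<le> e'") auto

lemma card_rem:
  assumes S: "S \<noteq> []"
  shows "card (shift1 (mus S) - mus (c # S)) \<le> 1"
proof (rule card_le1I)
  show "finite (shift1 (mus S) - mus (c # S))" by (simp add: shift1_def finite_mus)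
next
  fix x y assume x: "x \<in> shift1 (mus S) - mus (c # S)" and y: "y \<in> shift1 (mus S) - mus (c # S)"
  obtain s e where xe: "x = (Suc s, Suc e)" and xs: "(s, e) \<in> mus S" using x by (auto simp: shift1_def)
  obtain s' e' where ye: "y = (Suc s', Suc e')" and ys: "(s', e') \<in> mus S" using y by (auto simp: shift1_def)
  have cx: "ch S (c # S) (sub S s e)" using rem_ch[OF xs] x xe by auto
  have cy: "ch S (c # S) (sub S s' e')" using rem_ch[OF ys] y ye by auto
  have "oc S (sub S s e) s" using xs by (intro oc_sub) (auto simp: mus_def)
  moreover have "oc S (sub S s' e') s'" using ys by (intro oc_sub) (auto simp: mus_def)
  ultimately have "s = s'" using same_start cx cy unfolding ch_def by metis
  thus "x = y" using nest2 xs ys xe ye by metis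
qed

lemma card_add:
  assumes S: "S \<noteq> []"
  shows "card (mus (c # S) - shift1 (mus S)) \<le> 3"
    and "shift1 (mus S) - mus (c # S) = {} \<Longrightarrow> card (mus (c # S) - shift1 (mus S)) \<le> 1"
proof -
  define U where "U = c # S"
  define X0 where "X0 = {x \<in> mus U. fst x = 0}"
  define X1 where "X1 = {x \<in> mus U. 0 < fst x \<and> ch S U (sub U (Suc (fst x)) (snd x))}"
  define X2 where "X2 = {x \<in> mus U. 0 < fst x \<and> ch S U (sub U (fst x) (snd x - 1))}"
  have sub: "mus U - shift1 (mus S) \<subseteq> X0 \<union> X1 \<union> X2"
  proof
    fix x assume "x \<in> mus U - shift1 (mus S)"
    then obtain s e where "x = (s, e)" "(s, e) \<in> mus U" "(s, e) \<notin> shift1 (mus S)" by (cases x) auto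
    thus "x \<in> X0 \<union> X1 \<union> X2" using add_class[of s e c S] by (auto simp: X0_def X1_def X2_def U_def)
  qed
  have fin: "finite X0" "finite X1" "finite X2"
    by (auto simp: X0_def X1_def X2_def intro: finite_subset[OF _ finite_mus])
  have c0: "card X0 \<le> 1"
  proof (rule card_le1I[OF fin(1)])
    fix x y assume "x \<in> X0" "y \<in> X0"
    thus "x = y" using nest2 unfolding X0_def by (cases x, cases y) auto
  qed
  have c1: "card X1 \<le> 1"
  proof (rule card_le1I[OF fin(2)])
    fix x y assume x: "x \<in> X1" and y: "y \<in> X1"
    obtain s e where xe: "x = (s, e)" by (cases x)
    obtain s' e' where ye: "y = (s', e')" by (cases y)
    have xm: "(s, e) \<in> mus U" "0 < s" "ch S U (sub S s (e - 1))"
      using x xe by (auto simp: X1_def U_def sub_Cons)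
    have ym: "(s', e') \<in> mus U" "0 < s'" "ch S U (sub S s' (e' - 1))"
      using y ye by (auto simp: X1_def U_def sub_Cons)
    have "oc S (sub S s (e - 1)) s" using xm by (intro oc_sub) (auto simp: mus_def U_def)
    moreover have "oc S (sub S s' (e' - 1)) s'" using ym by (intro oc_sub) (auto simp: mus_def U_def)
    ultimately have "s = s'" using same_start xm ym unfolding ch_def by metis
    thus "x = y" using nest2 xm ym xe ye by metis
  qed
  have c2: "card X2 \<le> 1"
  proof (rule card_le1I[OF fin(3)])
    fix x y assume x: "x \<in> X2" and y: "y \<in> X2"
    obtain s e where xe: "x = (s, e)" by (cases x)
    obtain s' e' where ye: "y = (s', e')" by (cases y)
    have xm: "(s, e) \<in> mus U" "0 < s" "ch S U (sub S (s - 1) (e - 1 - 1))"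
      using x xe by (auto simp: X2_def U_def sub_Cons)
    have ym: "(s', e') \<in> mus U" "0 < s'" "ch S U (sub S (s' - 1) (e' - 1 - 1))"
      using y ye by (auto simp: X2_def U_def sub_Cons)
    have "oc S (sub S (s - 1) (e - 1 - 1)) (s - 1)" using xm by (intro oc_sub) (auto simp: mus_def U_def)
    moreover have "oc S (sub S (s' - 1) (e' - 1 - 1)) (s' - 1)" using ym by (intro oc_sub) (auto simp: mus_def U_def)
    ultimately have "s - 1 = s' - 1" using same_start xm ym unfolding ch_def by metis
    hence "s = s'" using xm ym by simp
    thus "x = y" using nest2 xm ym xe ye by metis
  qed
  have "card (mus U - shift1 (mus S)) \<le> card (X0 \<union> X1 \<union> X2)"
    using sub fin by (intro card_mono) auto
  also have "\<dots> \<le> card X0 + card X1 + card X2" by (meson card_Un_le le_trans add_right_mono)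
  finally show "card (mus (c # S) - shift1 (mus S)) \<le> 3" using c0 c1 c2 by (simp add: U_def)
  assume e: "shift1 (mus S) - mus (c # S) = {}"
  have "X1 = {}" "X2 = {}" using rem_exists[OF S, of c] e by (auto simp: X1_def X2_def U_def)
  hence "mus U - shift1 (mus S) \<subseteq> X0" using sub by auto
  hence "card (mus U - shift1 (mus S)) \<le> card X0" using fin by (intro card_mono) auto
  thus "card (mus (c # S) - shift1 (mus S)) \<le> 1" using c0 by (simp add: U_def)
qed


lemma substr_sub:
  assumes "1 \<le> a" "a \<le> s" "s \<le> t" "t \<le> b"
  shows "substr T s t = sub (substr T a b) (s - a) (t + 1 - a)"
proof -
  have "sub (substr T a b) (s - a) (t + 1 - a)
      = take (t + 1 - s) (drop (s - a) (take (Suc b - a) (drop (a - 1) T)))"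
    using assms by (simp add: sub_def substr_def)
  also have "\<dots> = take (t + 1 - s) (take (Suc b - s) (drop (s - 1) T))"
    using assms by (simp add: drop_take drop_drop)
  also have "\<dots> = take (t + 1 - s) (drop (s - 1) T)"
    using assms by (simp add: min_def)
  finally show ?thesis by (simp add: substr_def)
qed

lemma len_substr: "1 \<le> a \<Longrightarrow> a \<le> Suc b \<Longrightarrow> b \<le> length T \<Longrightarrow> length (substr T a b) = Suc b - a"
  by (simp add: substr_def)

lemma tl_sub: "tl (sub W x y) = sub W (Suc x) y"
  by (simp add: sub_def tl_take tl_drop drop_Suc)

lemma butlast_sub: "y \<le> length W \<Longrightarrow> butlast (sub W x y) = sub W x (y - 1)"
  by (simp add: sub_def butlast_take)

lemma strict_cases:
  assumes "strict_sublist u w" shows "sublist u (tl w) \<or> sublist u (butlast w)"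
proof -
  obtain x y where w: "w = x @ u @ y" and uw: "u \<noteq> w"
    using assms by (auto simp: strict_sublist_def sublist_def)
  hence ne: "x \<noteq> [] \<or> y \<noteq> []" by auto
  show ?thesis
  proof (cases "x = []")
    case False
    hence "tl w = tl x @ u @ y" using w by simp
    thus ?thesis by (metis sublist_appendI)
  next
    case True
    hence "y \<noteq> []" using ne by simp
    hence "butlast w = x @ u @ butlast y" using w by (simp add: butlast_append)
    thus ?thesis by (metis sublist_appendI)
  qed
qed

lemma strict_tl: "w \<noteq> [] \<Longrightarrow> strict_sublist (tl w) w"
proof -
  assume "w \<noteq> []"
  then obtain z zs where "w = z # zs" by (cases w) auto
  thus ?thesis by (auto simp: strict_sublist_def sublist_def) (metis append_Nil append_Cons append_Nil2)
qed

lemma strict_butlast: "w \<noteq> [] \<Longrightarrow> strict_sublist (butlast w) w"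
proof -
  assume ne: "w \<noteq> []"
  hence "w = butlast w @ [last w] @ []" by simp
  hence "sublist (butlast w) w" by (metis sublist_appendI append_Nil)
  moreover have "butlast w \<noteq> w" using ne by (metis length_butlast diff_less length_greater_0_conv less_not_refl zero_less_one)
  ultimately show ?thesis by (simp add: strict_sublist_def)
qed

lemma strict_all:
  assumes "w \<noteq> []"
  shows "(\<forall>u. strict_sublist u w \<longrightarrow> 2 \<le> occ W u) \<longleftrightarrow> 2 \<le> occ W (tl w) \<and> 2 \<le> occ W (butlast w)"
proof
  assume "\<forall>u. strict_sublist u w \<longrightarrow> 2 \<le> occ W u"
  thus "2 \<le> occ W (tl w) \<and> 2 \<le> occ W (butlast w)" using strict_tl strict_butlast assms by blast
next
  assume h: "2 \<le> occ W (tl w) \<and> 2 \<le> occ W (butlast w)"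
  show "\<forall>u. strict_sublist u w \<longrightarrow> 2 \<le> occ W u"
  proof (intro allI impI)
    fix u assume "strict_sublist u w"
    hence "sublist u (tl w) \<or> sublist u (butlast w)" by (rule strict_cases)
    thus "2 \<le> occ W u" using h occ_mono[of u "tl w" W] occ_mono[of u "butlast w" W] by auto
  qed
qed

lemma MUS_img:
  assumes a: "1 \<le> a" "a \<le> b" "b \<le> length T"
  shows "MUS T a b = (\<lambda>(s, e). (s + a, e + a - 1)) ` mus (substr T a b)"
proof (rule set_eqI)
  fix z :: "nat \<times> nat"
  obtain s t where z: "z = (s, t)" by (cases z)
  define W where "W = substr T a b"
  have lW: "length W = Suc b - a" using a by (simp add: W_def len_substr)
  show "z \<in> MUS T a b \<longleftrightarrow> z \<in> (\<lambda>(s, e). (s + a, e + a - 1)) ` mus (substr T a b)"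
  proof
    assume "z \<in> MUS T a b"
    hence m: "a \<le> s" "s \<le> t" "t \<le> b" "occ W (substr T s t) = 1"
      "\<forall>u. strict_sublist u (substr T s t) \<longrightarrow> 2 \<le> occ W u"
      by (auto simp: MUS_def z W_def)
    have eq: "substr T s t = sub W (s - a) (t + 1 - a)" using m a by (simp add: W_def substr_sub)
    have ne: "sub W (s - a) (t + 1 - a) \<noteq> []"
    proof -
      have "length (sub W (s - a) (t + 1 - a)) = t + 1 - a - (s - a)" using m lW by (intro len_sub) auto
      thus ?thesis using m by auto
    qed
    have "2 \<le> occ W (tl (sub W (s - a) (t + 1 - a))) \<and> 2 \<le> occ W (butlast (sub W (s - a) (t + 1 - a)))"
      using m(5) strict_all[OF ne] eq by simp
    hence "2 \<le> occ W (sub W (Suc (s - a)) (t + 1 - a)) \<and> 2 \<le> occ W (sub W (s - a) (t + 1 - a - 1))"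
      using m lW by (simp add: tl_sub butlast_sub)
    hence "(s - a, t + 1 - a) \<in> mus W" using m lW eq by (auto simp: mus_def)
    moreover have "z = (\<lambda>(s, e). (s + a, e + a - 1)) (s - a, t + 1 - a)" using m z by auto
    ultimately show "z \<in> (\<lambda>(s, e). (s + a, e + a - 1)) ` mus (substr T a b)"
      unfolding W_def by blast
  next
    assume "z \<in> (\<lambda>(s, e). (s + a, e + a - 1)) ` mus (substr T a b)"
    then obtain x y where xy: "(x, y) \<in> mus W" "z = (x + a, y + a - 1)" by (auto simp: W_def)
    have m: "x < y" "y \<le> Suc b - a" "occ W (sub W x y) = 1" "2 \<le> occ W (sub W (Suc x) y)"
      "2 \<le> occ W (sub W x (y - 1))" using xy lW by (auto simp: mus_def)
    have st: "s = x + a" "t = y + a - 1" using xy z by auto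
    have r: "a \<le> s" "s \<le> t" "t \<le> b" using st m a by auto
    have eq: "substr T s t = sub W x y" using substr_sub[of a s t b T] r a st m by (simp add: W_def)
    have ne: "sub W x y \<noteq> []"
    proof -
      have "length (sub W x y) = y - x" using m lW by (intro len_sub) auto
      thus ?thesis using m by auto
    qed
    have "\<forall>u. strict_sublist u (sub W x y) \<longrightarrow> 2 \<le> occ W u"
      using strict_all[OF ne] m lW by (simp add: tl_sub butlast_sub)
    thus "z \<in> MUS T a b" using r eq m z by (simp add: MUS_def W_def)
  qed
qed

lemma card_diff_int:
  assumes "finite A" "finite B"
  shows "int (card A) - int (card B) = int (card (A - B)) - int (card (B - A))"
proof -
  have "card A = card (A - B) + card (A \<inter> B)"
    using assms by (subst card_Un_disjoint[symmetric]) (auto intro: arg_cong[where f = card])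
  moreover have "card B = card (B - A) + card (A \<inter> B)"
    using assms by (subst card_Un_disjoint[symmetric]) (auto intro: arg_cong[where f = card])
  ultimately show ?thesis by simp
qed

lemma substr_Cons:
  assumes "1 < i" "i \<le> j" "j \<le> length T"
  shows "substr T (i - 1) j = T ! (i - 2) # substr T i j"
proof -
  have d: "drop (i - 2) T = T ! (i - 2) # drop (i - 1) T"
    using assms Cons_nth_drop_Suc[of "i - 2" T] by (simp add: Suc_diff_Suc numeral_2_eq_2)
  have "Suc j - (i - 1) = Suc (Suc j - i)" using assms by simp
  thus ?thesis using d assms by (simp add: substr_def numeral_2_eq_2)
qed

lemma reduce:
  assumes i: "1 < i" "i \<le> j" "j \<le> length T"
  defines "A \<equiv> mus (substr T (i - 1) j)" and "B \<equiv> shift1 (mus (substr T i j))"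
  shows "card (symdiff (MUS T (i - 1) j) (MUS T i j)) = card (A - B) + card (B - A)"
    and "int (card (MUS T (i - 1) j)) - int (card (MUS T i j)) = int (card (A - B)) - int (card (B - A))"
proof -
  define h where "h = (\<lambda>(s::nat, e::nat). (s + (i - 1), e + (i - 1) - 1))"
  have M1: "MUS T (i - 1) j = h ` A" using i by (simp add: MUS_img A_def h_def)
  have "MUS T i j = (\<lambda>(s, e). (s + i, e + i - 1)) ` mus (substr T i j)" using i by (simp add: MUS_img)
  also have "\<dots> = h ` B" unfolding B_def shift1_def image_image h_def
    using i by (intro image_cong) auto
  finally have M2: "MUS T i j = h ` B" .
  have inj: "inj h" unfolding h_def inj_def using i by auto
  have fA: "finite A" and fB: "finite B" by (auto simp: A_def B_def shift1_def finite_mus)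
  have "symdiff (MUS T (i - 1) j) (MUS T i j) = h ` (A - B) \<union> h ` (B - A)"
    unfolding M1 M2 symdiff_def using inj by (simp add: image_set_diff)
  hence "card (symdiff (MUS T (i - 1) j) (MUS T i j)) = card (h ` (A - B)) + card (h ` (B - A))"
  proof -
    have "h ` (A - B) \<inter> h ` (B - A) = {}" using inj by (auto simp: inj_eq)
    thus ?thesis using fA fB \<open>symdiff _ _ = _\<close> by (simp add: card_Un_disjoint)
  qed
  thus "card (symdiff (MUS T (i - 1) j) (MUS T i j)) = card (A - B) + card (B - A)"
    using inj by (simp add: card_image inj_on_subset)
  have "card (MUS T (i - 1) j) = card A" "card (MUS T i j) = card B"
    unfolding M1 M2 using inj by (simp_all add: card_image inj_on_subset)
  thus "int (card (MUS T (i - 1) j)) - int (card (MUS T i j)) = int (card (A - B)) - int (card (B - A))"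
    using card_diff_int[OF fA fB] by simp
qed

lemma part1:
  assumes i: "1 < i" "i \<le> j" "j \<le> length T"
  shows "card (symdiff (MUS T (i - 1) j) (MUS T i j)) \<le> 4
            \<and> -1 \<le> int (card (MUS T (i - 1) j)) - int (card (MUS T i j))
            \<and> int (card (MUS T (i - 1) j)) - int (card (MUS T i j)) \<le> 2"
proof -
  define c where "c = T ! (i - 2)"
  define S where "S = substr T i j"
  have U: "substr T (i - 1) j = c # S" using substr_Cons[OF i] by (simp add: c_def S_def)
  have S: "S \<noteq> []" using i len_substr[of i j T] by (auto simp: S_def)
  have r: "card (shift1 (mus S) - mus (c # S)) \<le> 1" by (rule card_rem[OF S])
  have a: "card (mus (c # S) - shift1 (mus S)) \<le> 3" by (rule card_add(1)[OF S])
  have a1: "shift1 (mus S) - mus (c # S) = {} \<Longrightarrow> card (mus (c # S) - shift1 (mus S)) \<le> 1"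
    by (rule card_add(2)[OF S])
  have a1': "card (shift1 (mus S) - mus (c # S)) = 0 \<Longrightarrow> card (mus (c # S) - shift1 (mus S)) \<le> 1"
    using a1 by (simp add: shift1_def finite_mus)
  show ?thesis using reduce[OF i] r a a1' unfolding U S_def[symmetric] by linarith
qed


lemma sub_nth: "s \<le> e \<Longrightarrow> e \<le> length W \<Longrightarrow> sub W s e = map (\<lambda>k. W ! (s + k)) [0..<e - s]"
  by (simp add: sub_def list_eq_iff_nth_eq)

lemma oc1: "oc W [x] p \<longleftrightarrow> p < length W \<and> W ! p = x"
proof -
  have "p < length W \<Longrightarrow> take 1 (drop p W) = [W ! p]"
    by (metis Cons_nth_drop_Suc One_nat_def take_Suc_Cons take_0)
  thus ?thesis by (auto simp: oc_def)
qed

lemma oc2: "oc W [x, y] p \<longleftrightarrow> Suc p < length W \<and> W ! p = x \<and> W ! Suc p = y"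
proof -
  have "Suc p < length W \<Longrightarrow> take (Suc (Suc 0)) (drop p W) = [W ! p, W ! Suc p]"
    by (metis Cons_nth_drop_Suc Suc_lessD take_Suc_Cons take_0)
  thus ?thesis by (auto simp: oc_def)
qed

definition F1 :: "'a \<Rightarrow> 'a \<Rightarrow> 'a \<Rightarrow> nat \<Rightarrow> 'a list" where
  "F1 a b c m = replicate m c @ [a, b, b]"

lemma F1_len: "length (a # F1 a b c m) = m + 4" "length (F1 a b c m) = m + 3"
  by (simp_all add: F1_def)

lemma F1_nth: "k < m + 3 \<Longrightarrow> F1 a b c m ! k = (if k < m then c else if k = m then a else b)"
  by (auto simp: F1_def nth_append nth_Cons')

lemma U1_nth: "k < m + 4 \<Longrightarrow> (a # F1 a b c m) ! k = (if k = 0 then a else if k \<le> m then c else if k = m + 1 then a else b)"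
  by (cases k) (auto simp: F1_nth)

lemma F1_facts:
  assumes m: "2 \<le> m" and d: "a \<noteq> b" "a \<noteq> c" "b \<noteq> c"
  defines "U \<equiv> a # F1 a b c m" and "S \<equiv> F1 a b c m"
  shows "3 \<le> card (mus U - shift1 (mus S))" "1 \<le> card (shift1 (mus S) - mus U)"
proof -
  have lU: "length U = m + 4" and lS: "length S = m + 3" by (simp_all add: U_def S_def F1_len)
  have nU: "\<And>k. k < m + 4 \<Longrightarrow> U ! k = (if k = 0 then a else if k \<le> m then c else if k = m + 1 then a else b)"
    unfolding U_def by (rule U1_nth)
  have nS: "\<And>k. k < m + 3 \<Longrightarrow> S ! k = (if k < m then c else if k = m then a else b)"
    unfolding S_def by (rule F1_nth)
  have Ua2: "2 \<le> occ U [a]" by (rule occ_ge2[of _ _ 0 "m + 1"]) (use m lU nU in \<open>auto simp: oc1\<close>)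
  have Uc2: "2 \<le> occ U [c]" by (rule occ_ge2[of _ _ 1 2]) (use m lU nU in \<open>auto simp: oc1\<close>)
  have Ub2: "2 \<le> occ U [b]" by (rule occ_ge2[of _ _ "m + 2" "m + 3"]) (use m lU nU in \<open>auto simp: oc1\<close>)
  have Sa1: "occ S [a] = 1"
  proof (rule occ_eq1[of _ _ m])
    show "oc S [a] m" using lS nS by (simp add: oc1)
    fix q assume "oc S [a] q"
    hence "q < m + 3" "S ! q = a" using lS by (simp_all add: oc1)
    thus "q = m" using nS[of q] d by (auto split: if_splits)
  qed
  have Uac: "occ U [a, c] = 1"
  proof (rule occ_eq1[of _ _ 0])
    show "oc U [a, c] 0" using lU nU m by (simp add: oc2)
    fix q assume "oc U [a, c] q"
    hence "Suc q < m + 4" "U ! q = a" "U ! Suc q = c" using lU by (simp_all add: oc2)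
    thus "q = 0" using nU[of q] nU[of "Suc q"] d m by (auto split: if_splits)
  qed
  have Uca: "occ U [c, a] = 1"
  proof (rule occ_eq1[of _ _ m])
    show "oc U [c, a] m" using lU nU m by (simp add: oc2)
    fix q assume "oc U [c, a] q"
    hence "Suc q < m + 4" "U ! q = c" "U ! Suc q = a" using lU by (simp_all add: oc2)
    thus "q = m" using nU[of q] nU[of "Suc q"] d m by (auto split: if_splits)
  qed
  have Uab: "occ U [a, b] = 1"
  proof (rule occ_eq1[of _ _ "m + 1"])
    show "oc U [a, b] (m + 1)" using lU nU m by (simp add: oc2)
    fix q assume "oc U [a, b] q"
    hence "Suc q < m + 4" "U ! q = a" "U ! Suc q = b" using lU by (simp_all add: oc2)
    thus "q = m + 1" using nU[of q] nU[of "Suc q"] d m by (auto split: if_splits)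
  qed
  have s1: "sub U 0 2 = [a, c]" "sub U (Suc 0) 2 = [c]" "sub U 0 (2 - 1) = [a]"
    using lU nU m by (simp_all add: sub_nth upt_rec)
  have s2: "sub U m (m + 2) = [c, a]" "sub U (Suc m) (m + 2) = [a]" "sub U m (m + 2 - 1) = [c]"
    using lU nU m by (simp_all add: sub_nth upt_rec)
  have s3: "sub U (m + 1) (m + 3) = [a, b]" "sub U (Suc (m + 1)) (m + 3) = [b]" "sub U (m + 1) (m + 3 - 1) = [a]"
    using lU nU m by (simp_all add: sub_nth upt_rec)
  have s4: "sub S m (m + 1) = [a]" "sub S (Suc m) (m + 1) = []" "sub S m (m + 1 - 1) = []"
    using lS nS m by (simp_all add: sub_nth upt_rec)
  have s5: "sub U (m + 1) (m + 2) = [a]" using lU nU m by (simp add: sub_nth upt_rec)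
  have S2: "2 \<le> occ S []" using lS by (simp add: occ_Nil)
  have x1: "(0, 2) \<in> mus U - shift1 (mus S)"
    using s1 lU Uac Uc2 Ua2 by (simp add: mus_def in_shift1)
  have x2: "(m, m + 2) \<in> mus U - shift1 (mus S)"
  proof -
    have "(m, m + 2) \<in> mus U" using s2 lU Uca Uc2 Ua2 by (simp add: mus_def)
    moreover have "(m - 1, m + 1) \<notin> mus S" using s4 Sa1 m by (simp add: mus_def)
    ultimately show ?thesis by (simp add: in_shift1)
  qed
  have x3: "(m + 1, m + 3) \<in> mus U - shift1 (mus S)"
  proof -
    have "(m + 1, m + 3) \<in> mus U" using s3 lU Uab Ub2 Ua2 by (simp add: mus_def)
    moreover have "(m, m + 2) \<notin> mus S" using s4 Sa1 m by (simp add: mus_def)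
    ultimately show ?thesis by (simp add: in_shift1)
  qed
  have "{(0, 2), (m, m + 2), (m + 1, m + 3)} \<subseteq> mus U - shift1 (mus S)" using x1 x2 x3 by auto
  from card_mono[OF _ this] show "3 \<le> card (mus U - shift1 (mus S))" using m by (simp add: finite_mus)
  have y: "(m + 1, m + 2) \<in> shift1 (mus S) - mus U"
  proof -
    have "(m, m + 1) \<in> mus S" using s4 lS Sa1 S2 by (simp add: mus_def)
    moreover have "(m + 1, m + 2) \<notin> mus U" using s5 Ua2 by (simp add: mus_def)
    ultimately show ?thesis by (simp add: in_shift1)
  qed
  hence "shift1 (mus S) - mus U \<noteq> {}" by blast
  thus "1 \<le> card (shift1 (mus S) - mus U)" by (simp add: shift1_def finite_mus Suc_le_eq card_gt_0_iff)
qed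


definition F2 :: "'a \<Rightarrow> 'a \<Rightarrow> nat \<Rightarrow> 'a list" where
  "F2 a b m = b # replicate m a @ [b, b]"

lemma F2_nth: "k < m + 3 \<Longrightarrow> F2 a b m ! k = (if k = 0 then b else if k \<le> m then a else b)"
  by (cases k) (auto simp: F2_def nth_append nth_Cons')

lemma U2_nth: "k < m + 4 \<Longrightarrow> (b # F2 a b m) ! k = (if k \<le> 1 then b else if k \<le> m + 1 then a else b)"
  by (cases k) (auto simp: F2_nth)

lemma F2_facts:
  assumes m: "2 \<le> m" and d: "a \<noteq> b"
  defines "U \<equiv> b # F2 a b m" and "S \<equiv> F2 a b m"
  shows "1 \<le> card (shift1 (mus S) - mus U)" "mus U - shift1 (mus S) = {}"
proof -
  have lU: "length U = m + 4" and lS: "length S = m + 3" by (simp_all add: U_def S_def F2_def)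
  have nU: "\<And>k. k < m + 4 \<Longrightarrow> U ! k = (if k \<le> 1 then b else if k \<le> m + 1 then a else b)"
    unfolding U_def by (rule U2_nth)
  have nS: "\<And>k. k < m + 3 \<Longrightarrow> S ! k = (if k = 0 then b else if k \<le> m then a else b)"
    unfolding S_def by (rule F2_nth)
  have Sb2: "2 \<le> occ S [b]" by (rule occ_ge2[of _ _ 0 "m + 1"]) (use m lS nS in \<open>auto simp: oc1\<close>)
  have Ub2: "2 \<le> occ U [b]" by (rule occ_ge2[of _ _ 0 1]) (use m lU nU in \<open>auto simp: oc1\<close>)
  have Ubb2: "2 \<le> occ U [b, b]" by (rule occ_ge2[of _ _ 0 "m + 2"]) (use m lU nU in \<open>auto simp: oc2\<close>)
  have Sbb_pos: "\<And>q. oc S [b, b] q \<Longrightarrow> q = m + 1"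
  proof -
    fix q assume "oc S [b, b] q"
    hence "Suc q < m + 3" "S ! q = b" "S ! Suc q = b" using lS by (simp_all add: oc2)
    thus "q = m + 1" using nS[of q] nS[of "Suc q"] d m by (auto split: if_splits)
  qed
  have Sbb: "occ S [b, b] = 1"
  proof (rule occ_eq1[of _ _ "m + 1"])
    show "oc S [b, b] (m + 1)" using lS nS m by (simp add: oc2)
  qed (rule Sbb_pos)
  have Ubb_pos: "\<And>q. oc U [b, b] q \<Longrightarrow> q = 0 \<or> q = m + 2"
  proof -
    fix q assume "oc U [b, b] q"
    hence "Suc q < m + 4" "U ! q = b" "U ! Suc q = b" using lU by (simp_all add: oc2)
    thus "q = 0 \<or> q = m + 2" using nU[of q] nU[of "Suc q"] d m by (auto split: if_splits)
  qed
  have Uba: "occ U [b, a] = 1"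
  proof (rule occ_eq1[of _ _ 1])
    show "oc U [b, a] 1" using lU nU m by (simp add: oc2)
    fix q assume "oc U [b, a] q"
    hence "Suc q < m + 4" "U ! q = b" "U ! Suc q = a" using lU by (simp_all add: oc2)
    thus "q = 1" using nU[of q] nU[of "Suc q"] d m by (auto split: if_splits)
  qed
  have Uab: "occ U [a, b] = 1"
  proof (rule occ_eq1[of _ _ "m + 1"])
    show "oc U [a, b] (m + 1)" using lU nU m by (simp add: oc2)
    fix q assume "oc U [a, b] q"
    hence "Suc q < m + 4" "U ! q = a" "U ! Suc q = b" using lU by (simp_all add: oc2)
    thus "q = m + 1" using nU[of q] nU[of "Suc q"] d m by (auto split: if_splits)
  qed
  have s1: "sub S (m + 1) (m + 3) = [b, b]" "sub S (Suc (m + 1)) (m + 3) = [b]" "sub S (m + 1) (m + 3 - 1) = [b]"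
    using lS nS m by (simp_all add: sub_nth upt_rec)
  have s2: "sub U (m + 2) (m + 4) = [b, b]" using lU nU m by (simp add: sub_nth upt_rec)
  have h: "(m + 1, m + 3) \<in> mus S" using s1 lS Sbb Sb2 by (simp add: mus_def)
  have "(Suc (m + 1), Suc (m + 3)) \<in> shift1 (mus S)" using h unfolding shift1_def by (rule rev_image_eqI) simp
  moreover have "(Suc (m + 1), Suc (m + 3)) = (m + 2, m + 4)" by simp
  moreover have "(m + 2, m + 4) \<notin> mus U" using s2 Ubb2 by (simp add: mus_def)
  ultimately have "(m + 2, m + 4) \<in> shift1 (mus S) - mus U" by (metis DiffI)
  hence "shift1 (mus S) - mus U \<noteq> {}" by blast
  thus "1 \<le> card (shift1 (mus S) - mus U)" by (simp add: shift1_def finite_mus Suc_le_eq card_gt_0_iff)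
  have chv: "\<And>v. ch S U v \<Longrightarrow> v = [b, b]"
  proof -
    fix v assume cv: "ch S U v"
    have vt: "v = take (length v) U" using cv by (auto simp: ch_def prefix_def)
    have o: "occ S v = 1" using cv by (simp add: ch_def)
    then obtain p where p: "oc S v p" using occ1_ex by blast
    have pl: "p + length v \<le> m + 3" using p lS by (simp add: oc_def)
    have tU: "take 2 U = [b, b]" by (simp add: U_def F2_def)
    consider "length v = 0" | "length v = 1" | "2 \<le> length v" by linarith
    thus "v = [b, b]"
    proof cases
      case 1 hence "v = []" by simp
      thus ?thesis using o lS by (simp add: occ_Nil)
    next
      case 2 hence "v = take 1 U" using vt by simp
      hence "v = [b]" by (simp add: U_def)
      thus ?thesis using o Sb2 by simp
    next
      case 3
      hence "take 2 v = [b, b]" using vt tU by (metis min_absorb1 take_take)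
      hence "v = [b, b] @ drop 2 v" by (metis append_take_drop_id)
      hence "oc S ([] @ [b, b] @ drop 2 v) p" using p by simp
      hence "oc S [b, b] p" using oc_sublist[of S "[]" "[b, b]" "drop 2 v" p] by simp
      hence "p = m + 1" by (rule Sbb_pos)
      hence "length v = 2" using pl 3 by simp
      thus ?thesis using \<open>take 2 v = [b, b]\<close> by simp
    qed
  qed
  show "mus U - shift1 (mus S) = {}"
  proof (rule ccontr)
    assume "mus U - shift1 (mus S) \<noteq> {}"
    then obtain s e where x: "(s, e) \<in> mus U" "(s, e) \<notin> shift1 (mus S)" by auto
    have mx: "s < e" "e \<le> m + 4" "occ U (sub U s e) = 1" "2 \<le> occ U (sub U (Suc s) e)"
      "2 \<le> occ U (sub U s (e - 1))" using x lU by (auto simp: mus_def)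
    have cls: "s = 0 \<or> ch S U (sub U (Suc s) e) \<or> ch S U (sub U s (e - 1))"
      using add_class[of s e b S] x by (simp add: U_def S_def)
    show False
    proof (cases "s = 0")
      case True
      show False
      proof (cases "e \<le> 2")
        case True
        hence "e = 1 \<or> e = 2" using mx \<open>s = 0\<close> by auto
        moreover have "sub U 0 1 = [b]" "sub U 0 2 = [b, b]" using lU nU m by (simp_all add: sub_nth upt_rec)
        ultimately show False using mx Ub2 Ubb2 \<open>s = 0\<close> by auto
      next
        case False
        have "sublist (sub U 1 3) (sub U (Suc s) e)" using False \<open>s = 0\<close> by (intro sublist_sub) auto
        moreover have "sub U 1 3 = [b, a]" using lU nU m by (simp add: sub_nth upt_rec)
        ultimately have "occ U (sub U (Suc s) e) \<le> 1" using occ_mono Uba by metis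
        thus False using mx by simp
      qed
    next
      case False
      hence "ch S U (sub U (Suc s) e) \<or> ch S U (sub U s (e - 1))" using cls by simp
      thus False
      proof
        assume "ch S U (sub U (Suc s) e)"
        hence w: "sub U (Suc s) e = [b, b]" by (rule chv)
        have "oc U (sub U (Suc s) e) (Suc s)" using mx lU by (intro oc_sub) auto
        hence "oc U [b, b] (Suc s)" using w by simp
        hence "Suc s = 0 \<or> Suc s = m + 2" by (rule Ubb_pos)
        hence ss: "s = m + 1" by simp
        have "length (sub U (Suc s) e) = e - Suc s" using mx lU by (intro len_sub) auto
        hence "e = m + 4" using w ss by simp
        hence e1: "e - 1 = m + 3" by simp
        have sAB: "sub U (m + 1) (m + 3) = [a, b]" using lU nU m by (simp add: sub_nth upt_rec)
        have "sub U s (e - 1) = [a, b]" unfolding e1 ss by (fact sAB)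
        thus False using mx(5) Uab by simp
      next
        assume "ch S U (sub U s (e - 1))"
        hence w: "sub U s (e - 1) = [b, b]" by (rule chv)
        have "oc U (sub U s (e - 1)) s" using mx lU w by (intro oc_sub) (auto simp: sub_def)
        hence "oc U [b, b] s" using w by simp
        hence "s = 0 \<or> s = m + 2" by (rule Ubb_pos)
        hence ss: "s = m + 2" using False by simp
        have "length (sub U s (e - 1)) = e - 1 - s" using mx lU w by (intro len_sub) (auto simp: sub_def)
        thus False using w ss mx by simp
      qed
    qed
  qed
qed

lemma three_elems:
  assumes "finite X" "3 \<le> card X"
  obtains a b c where "a \<in> X" "b \<in> X" "c \<in> X" "a \<noteq> b" "a \<noteq> c" "b \<noteq> c"
proof -
  have h1: "Suc 2 \<le> card X" using assms by simp
  obtain a B where 1: "X = insert a B" "a \<notin> B" "2 \<le> card B" "finite B"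
    using card_le_Suc_iff[of 2 X, THEN iffD1, OF h1] by blast
  have h2: "Suc 1 \<le> card B" using 1 by simp
  obtain b C where 2: "B = insert b C" "b \<notin> C" "1 \<le> card C" "finite C"
    using card_le_Suc_iff[of 1 B, THEN iffD1, OF h2] by blast
  have h3: "Suc 0 \<le> card C" using 2 by simp
  obtain c D where 3: "C = insert c D"
    using card_le_Suc_iff[of 0 C, THEN iffD1, OF h3] by blast
  show ?thesis using that[of a b c] 1 2 3 by auto
qed

lemma embed:
  fixes x :: 'a and U :: "'a list"
  assumes "1 < i" "i \<le> j" "j \<le> n" "length U = j - i + 2"
  defines "T \<equiv> replicate (i - 2) x @ U @ replicate (n - j) x"
  shows "length T = n" "substr T (i - 1) j = U" "set T \<subseteq> insert x (set U)"
proof -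
  show "length T = n" using assms by (simp add: T_def)
  have "Suc j - (i - 1) = length U" using assms by simp
  moreover have "i - 1 - 1 = i - 2" by simp
  ultimately show "substr T (i - 1) j = U" by (simp add: substr_def T_def)
  show "set T \<subseteq> insert x (set U)" by (auto simp: T_def)
qed


lemma via_embed:
  fixes c :: 'a and S :: "'a list"
  assumes i: "1 < i" "i \<le> j" "j \<le> n" and l: "length (c # S) = j - i + 2"
  defines "T \<equiv> replicate (i - 2) c @ (c # S) @ replicate (n - j) c"
  shows "length T = n" "set T \<subseteq> insert c (set S)" "S \<noteq> []"
    "card (symdiff (MUS T (i - 1) j) (MUS T i j))
       = card (mus (c # S) - shift1 (mus S)) + card (shift1 (mus S) - mus (c # S))"
    "int (card (MUS T (i - 1) j)) - int (card (MUS T i j))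
       = int (card (mus (c # S) - shift1 (mus S))) - int (card (shift1 (mus S) - mus (c # S)))"
proof -
  note e = embed[OF i l, of c, folded T_def]
  show "length T = n" by (rule e(1))
  show "set T \<subseteq> insert c (set S)" using e(3) by simp
  show "S \<noteq> []" using l i by auto
  have jT: "j \<le> length T" using e(1) i by simp
  have "T ! (i - 2) # substr T i j = c # S" using substr_Cons[OF i(1,2) jT] e(2) by simp
  hence sS: "substr T i j = S" by simp
  note r = reduce[OF i(1,2) jT]
  show "card (symdiff (MUS T (i - 1) j) (MUS T i j))
       = card (mus (c # S) - shift1 (mus S)) + card (shift1 (mus S) - mus (c # S))"
    using r(1) e(2) sS by simp
  show "int (card (MUS T (i - 1) j)) - int (card (MUS T i j))
       = int (card (mus (c # S) - shift1 (mus S))) - int (card (shift1 (mus S) - mus (c # S)))"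
    using r(2) e(2) sS by simp
qed

theorem theorem2:
  shows "(\<forall>(\<Sigma>::'a set) (T::'a list) i j.
            finite \<Sigma> \<and> card \<Sigma> \<ge> 2 \<and> set T \<subseteq> \<Sigma> \<and> 1 < i \<and> i \<le> j \<and> j \<le> length T \<longrightarrow>
              card (symdiff (MUS T (i - 1) j) (MUS T i j)) \<le> 4
            \<and> -1 \<le> int (card (MUS T (i - 1) j)) - int (card (MUS T i j))
            \<and> int (card (MUS T (i - 1) j)) - int (card (MUS T i j)) \<le> 2)
       \<and> (\<forall>(\<Sigma>::'a set) (n::nat) i j.
            finite \<Sigma> \<and> card \<Sigma> \<ge> 3 \<and> 1 < i \<and> i \<le> j \<and> j \<le> n \<and> j - i + 1 \<ge> 5 \<longrightarrow>
              (\<exists>T. length T = n \<and> set T \<subseteq> \<Sigma> \<and>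
                   card (symdiff (MUS T (i - 1) j) (MUS T i j)) = 4)
            \<and> (\<exists>T. length T = n \<and> set T \<subseteq> \<Sigma> \<and>
                   int (card (MUS T (i - 1) j)) - int (card (MUS T i j)) = 2)
            \<and> (\<exists>T. length T = n \<and> set T \<subseteq> \<Sigma> \<and>
                   int (card (MUS T (i - 1) j)) - int (card (MUS T i j)) = -1))"
proof (intro conjI allI impI)
  fix \<Sigma> :: "'a set" and T :: "'a list" and i j :: nat
  assume H: "finite \<Sigma> \<and> card \<Sigma> \<ge> 2 \<and> set T \<subseteq> \<Sigma> \<and> 1 < i \<and> i \<le> j \<and> j \<le> length T"
  note p = part1[of i j T]
  show "card (symdiff (MUS T (i - 1) j) (MUS T i j)) \<le> 4" using p H by blast
  show "-1 \<le> int (card (MUS T (i - 1) j)) - int (card (MUS T i j))" using p H by blast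
  show "int (card (MUS T (i - 1) j)) - int (card (MUS T i j)) \<le> 2" using p H by blast
next
  fix \<Sigma> :: "'a set" and n i j :: nat
  assume H: "finite \<Sigma> \<and> card \<Sigma> \<ge> 3 \<and> 1 < i \<and> i \<le> j \<and> j \<le> n \<and> j - i + 1 \<ge> 5"
  hence i: "1 < i" "i \<le> j" "j \<le> n" by auto
  obtain a b c where abc: "a \<in> \<Sigma>" "b \<in> \<Sigma>" "c \<in> \<Sigma>" "a \<noteq> b" "a \<noteq> c" "b \<noteq> c"
    using three_elems[of \<Sigma>] H by blast
  define m where "m = j - i - 2"
  have m: "2 \<le> m" using H unfolding m_def by auto
  have hj: "4 \<le> j - i" using H by auto
  have l1: "length (a # F1 a b c m) = j - i + 2" using hj unfolding F1_def m_def by simp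
  have l2: "length (b # F2 a b m) = j - i + 2" using hj unfolding F2_def m_def by simp
  note v1 = via_embed[OF i l1]
  note v2 = via_embed[OF i l2]
  define T1 where "T1 = replicate (i - 2) a @ (a # F1 a b c m) @ replicate (n - j) a"
  define T2 where "T2 = replicate (i - 2) b @ (b # F2 a b m) @ replicate (n - j) b"
  have st1: "set T1 \<subseteq> \<Sigma>" using v1(2) abc unfolding T1_def by (auto simp: F1_def)
  have st2: "set T2 \<subseteq> \<Sigma>" using v2(2) abc unfolding T2_def by (auto simp: F2_def)
  have f1: "3 \<le> card (mus (a # F1 a b c m) - shift1 (mus (F1 a b c m)))"
    "1 \<le> card (shift1 (mus (F1 a b c m)) - mus (a # F1 a b c m))"
    using F1_facts[OF m abc(4-6)] by auto
  have g1: "card (mus (a # F1 a b c m) - shift1 (mus (F1 a b c m))) \<le> 3"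
    "card (shift1 (mus (F1 a b c m)) - mus (a # F1 a b c m)) \<le> 1"
    using card_add(1)[OF v1(3)] card_rem[OF v1(3)] by auto
  have f2: "1 \<le> card (shift1 (mus (F2 a b m)) - mus (b # F2 a b m))"
    "mus (b # F2 a b m) - shift1 (mus (F2 a b m)) = {}"
    using F2_facts[OF m abc(4)] by auto
  have g2: "card (shift1 (mus (F2 a b m)) - mus (b # F2 a b m)) \<le> 1"
    using card_rem[OF v2(3)] by auto
  show "\<exists>T. length T = n \<and> set T \<subseteq> \<Sigma> \<and> card (symdiff (MUS T (i - 1) j) (MUS T i j)) = 4"
    using v1(1,4) st1 f1 g1 unfolding T1_def[symmetric] by (intro exI[of _ T1]) simp
  show "\<exists>T. length T = n \<and> set T \<subseteq> \<Sigma> \<and> int (card (MUS T (i - 1) j)) - int (card (MUS T i j)) = 2"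
    using v1(1,5) st1 f1 g1 unfolding T1_def[symmetric] by (intro exI[of _ T1]) simp
  show "\<exists>T. length T = n \<and> set T \<subseteq> \<Sigma> \<and> int (card (MUS T (i - 1) j)) - int (card (MUS T i j)) = -1"
    using v2(1,5) st2 f2 g2 unfolding T2_def[symmetric] by (intro exI[of _ T2]) simp
qed


end
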